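(* Let $k\in\{1,2\}$, $\beta\in\mathbb{R}\setminus\{0\}$, $h>0$, and let $p:\mathbb{R}\to\mathbb{R}$ be a bounded, strictly increasing, smooth function with all derivatives bounded; set $p_j=p(x_j)$. Let $\varphi^h\in\ell^2_h(\mathbb{Z})$ be real-valued and $u=u^h(t)$ the solution of $$\frac{d}{dt}u_j + D_+D_0D_-u_j + \beta\frac{k+1}{k+2}\Big[u_j^k D_0u_j + D_0(u^{k+1})_j\Big] + h\,(D_+D_-D_+D_-u)_j=0,\quad j\in\mathbb{Z},\qquad u(0)=\varphi^h.$$ Then $$\begin{aligned} &\tfrac12\tfrac{d}{dt}\|p^{1/2}u\|_{2,h}^2+(D_-u,D_+p\,D_-u)_h+\tfrac12(D_+u,D_-p\,D_+u)_h+h(D_+D_-u,p\,D_+D_-u)_h\\ &=-\tfrac h2(D_+D_-u,D_+p\,D_-u)_h+\tfrac h2(D_+u\,D_-p,D_+D_-u)_h-(D_-u,u_-\,D_0D_-p)_h\\ &\quad-h(D_+D_-u,D_-p\,D_-u)_h-h(D_+D_-u,D_+p\,D_+u)_h-h(D_+D_-u,u\,D_+D_-p)_h\\ &\quad+\tfrac\beta2\tfrac{k+1}{k+2}\big(u^{k+1},u_+D_+p+u_-D_-p\big)_h. \end{aligned}$$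
   Context: $x_j=jh$; $(z,w)_h=\sum_j h z_jw_j$ and $\|z\|_{2,h}^2=(z,z)_h$; $\ell^2_h(\mathbb{Z})$ is the space of sequences with finite $\|\cdot\|_{2,h}$. $D_+u_j=(u_{j+1}-u_j)/h$, $D_-u_j=(u_j-u_{j-1})/h$, $D_0u_j=(u_{j+1}-u_{j-1})/(2h)$; the operators act on the sequence $p=(p_j)$ as well. Translations: $(u_+)_j=u_{j+1}$, $(u_-)_j=u_{j-1}$. Products and powers of sequences (e.g. $D_+p\,D_-u$, $p^{1/2}u$, $u^{k+1}$) are componentwise. *)

theory Defs
  imports "HOL-Analysis.Analysis"
begin

type_synonym gridfun = "int \<Rightarrow> real"

definition Dplus :: "real \<Rightarrow> gridfun \<Rightarrow> gridfun" where
  "Dplus h u = (\<lambda>j. (u (j + 1) - u j) / h)"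

definition Dminus :: "real \<Rightarrow> gridfun \<Rightarrow> gridfun" where
  "Dminus h u = (\<lambda>j. (u j - u (j - 1)) / h)"

definition Dzero :: "real \<Rightarrow> gridfun \<Rightarrow> gridfun" where
  "Dzero h u = (\<lambda>j. (u (j + 1) - u (j - 1)) / (2 * h))"

definition shiftp :: "gridfun \<Rightarrow> gridfun" where
  "shiftp u = (\<lambda>j. u (j + 1))"

definition shiftm :: "gridfun \<Rightarrow> gridfun" where
  "shiftm u = (\<lambda>j. u (j - 1))"

definition ipr :: "real \<Rightarrow> gridfun \<Rightarrow> gridfun \<Rightarrow> real" where
  "ipr h z w = h * (\<Sum>\<^sub>\<infinity>j\<in>UNIV. z j * w j)"

definition in_l2h :: "gridfun \<Rightarrow> bool" where
  "in_l2h u \<longleftrightarrow> (\<lambda>j. (u j)\<^sup>2) summable_on UNIV"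

definition l2h_norm_sq :: "real \<Rightarrow> gridfun \<Rightarrow> real" where
  "l2h_norm_sq h u = ipr h u u"

definition smooth_bdd :: "(real \<Rightarrow> real) \<Rightarrow> bool" where
  "smooth_bdd p \<longleftrightarrow> (\<forall>n. (\<forall>x. ((deriv ^^ n) p) differentiable (at x))
                          \<and> bounded (range ((deriv ^^ n) p)))"

text \<open>right-hand side operator of the scheme (the ODE reads d/dt u = - F u)\<close>
definition Fop :: "nat \<Rightarrow> real \<Rightarrow> real \<Rightarrow> gridfun \<Rightarrow> gridfun" where
  "Fop k \<beta> h u = (\<lambda>j. Dplus h (Dzero h (Dminus h u)) j
      + \<beta> * ((real k + 1) / (real k + 2)) *
          ((u j) ^ k * Dzero h u j + Dzero h (\<lambda>i. (u i) ^ (k + 1)) j)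
      + h * Dplus h (Dminus h (Dplus h (Dminus h u))) j)"

definition is_solution :: "nat \<Rightarrow> real \<Rightarrow> real \<Rightarrow> real \<Rightarrow> gridfun \<Rightarrow> (real \<Rightarrow> gridfun) \<Rightarrow> bool" where
  "is_solution k \<beta> h T \<phi> u \<longleftrightarrow>
     u 0 = \<phi> \<and>
     (\<forall>t\<in>{0..<T}. in_l2h (u t)) \<and>
     (\<forall>t\<in>{0..<T}. ((\<lambda>s. \<Sum>\<^sub>\<infinity>j\<in>UNIV. (u s j - u t j)\<^sup>2) \<longlongrightarrow> 0) (at t within {0..<T})) \<and>
     (\<forall>t\<in>{0..<T}. \<forall>j. ((\<lambda>s. u s j) has_real_derivative (- Fop k \<beta> h (u t) j)) (at t within {0..<T}))"

end

theory Submission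
  imports Defs
begin


definition bdd :: "gridfun \<Rightarrow> bool" where
  "bdd f \<longleftrightarrow> (\<exists>M. \<forall>j. \<bar>f j\<bar> \<le> M)"

lemma l2_prod_summable:
  assumes "in_l2h f" "in_l2h g"
  shows "(\<lambda>j. f j * g j) summable_on UNIV"
proof -
  have s: "(\<lambda>j. (f j)\<^sup>2 + (g j)\<^sup>2) summable_on UNIV"
    using assms unfolding in_l2h_def by (rule summable_on_add)
  have "(\<lambda>j. norm (f j * g j)) summable_on UNIV"
  proof (rule summable_on_comparison_test[OF s])
    fix j
    show "norm (f j * g j) \<le> (f j)\<^sup>2 + (g j)\<^sup>2"
    proof -
      have "2*(\<bar>f j\<bar>*\<bar>g j\<bar>) \<le> \<bar>f j\<bar>\<^sup>2 + \<bar>g j\<bar>\<^sup>2"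
        using zero_le_power2[of "\<bar>f j\<bar> - \<bar>g j\<bar>"] unfolding power2_diff by linarith
      moreover have "0 \<le> \<bar>f j\<bar>*\<bar>g j\<bar>" by simp
      ultimately show ?thesis by (simp only: abs_mult real_norm_def power2_abs)
    qed
  qed simp
  then show ?thesis by (rule abs_summable_summable)
qed

lemma l2_shift:
  assumes "in_l2h f" shows "in_l2h (\<lambda>j. f (j + a))"
proof -
  have b: "bij_betw (\<lambda>j::int. j + a) UNIV UNIV"
    by (rule bij_betwI[where g="\<lambda>j. j - a"]) auto
  show ?thesis using assms unfolding in_l2h_def
    using summable_on_reindex_bij_betw[OF b, of "\<lambda>j. (f j)\<^sup>2"] by simp
qed

lemma infsum_shift:
  "infsum (\<lambda>j::int. f (j + a)) UNIV = infsum f UNIV"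
proof -
  have b: "bij_betw (\<lambda>j::int. j + a) UNIV UNIV"
    by (rule bij_betwI[where g="\<lambda>j. j - a"]) auto
  show ?thesis using infsum_reindex_bij_betw[OF b, of f] by simp
qed

lemma summable_shift:
  "(\<lambda>j::int. f (j + a)) summable_on UNIV \<longleftrightarrow> f summable_on UNIV"
proof -
  have b: "bij_betw (\<lambda>j::int. j + a) UNIV UNIV"
    by (rule bij_betwI[where g="\<lambda>j. j - a"]) auto
  show ?thesis using summable_on_reindex_bij_betw[OF b, of f] by simp
qed

lemma l2_add:
  assumes "in_l2h f" "in_l2h g" shows "in_l2h (\<lambda>j. f j + g j)"
  unfolding in_l2h_def
proof (rule summable_on_comparison_test)
  show "(\<lambda>j. 2 * (f j)\<^sup>2 + 2 * (g j)\<^sup>2) summable_on UNIV"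
    using assms unfolding in_l2h_def
    by (intro summable_on_add summable_on_cmult_right)
  fix j show "(f j + g j)\<^sup>2 \<le> 2 * (f j)\<^sup>2 + 2 * (g j)\<^sup>2"
    using zero_le_power2[of "f j - g j"] unfolding power2_diff power2_sum by linarith
qed simp

lemma l2_bmult:
  assumes "bdd b" "in_l2h f" shows "in_l2h (\<lambda>j. b j * f j)"
proof -
  obtain M where M: "\<And>j. \<bar>b j\<bar> \<le> M" using assms(1) unfolding bdd_def by blast
  show ?thesis unfolding in_l2h_def
  proof (rule summable_on_comparison_test)
    show "(\<lambda>j. M\<^sup>2 * (f j)\<^sup>2) summable_on UNIV"
      using assms unfolding in_l2h_def by (intro summable_on_cmult_right)
    fix j
    have "(b j)\<^sup>2 \<le> M\<^sup>2" using M[of j] by (metis abs_ge_zero power2_abs power_mono)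
    then show "(b j * f j)\<^sup>2 \<le> M\<^sup>2 * (f j)\<^sup>2"
      by (simp add: power_mult_distrib mult_right_mono)
  qed simp
qed

lemma bdd_const: "bdd (\<lambda>j. c)"
  unfolding bdd_def by auto

lemma l2_cmult: "in_l2h f \<Longrightarrow> in_l2h (\<lambda>j. c * f j)"
  using l2_bmult[OF bdd_const] .

lemma l2_uminus: "in_l2h f \<Longrightarrow> in_l2h (\<lambda>j. - f j)"
  using l2_cmult[of f "-1"] by simp

lemma l2_diff: "in_l2h f \<Longrightarrow> in_l2h g \<Longrightarrow> in_l2h (\<lambda>j. f j - g j)"
  using l2_add[OF _ l2_uminus, of f g] by simp

lemma l2_div: "in_l2h f \<Longrightarrow> in_l2h (\<lambda>j. f j / c)"
  using l2_cmult[of f "1/c"] by simp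

lemma l2_bmult': "in_l2h f \<Longrightarrow> bdd b \<Longrightarrow> in_l2h (\<lambda>j. f j * b j)"
  using l2_bmult[of b f] by (simp add: mult.commute)

lemma l2_imp_bdd:
  assumes "in_l2h f" shows "bdd f"
proof -
  have "\<And>j. (f j)\<^sup>2 \<le> infsum (\<lambda>j. (f j)\<^sup>2) UNIV"
  proof -
    fix j
    have "sum (\<lambda>j. (f j)\<^sup>2) {j} \<le> infsum (\<lambda>j. (f j)\<^sup>2) UNIV"
      using assms unfolding in_l2h_def by (intro finite_sum_le_infsum) auto
    then show "(f j)\<^sup>2 \<le> infsum (\<lambda>j. (f j)\<^sup>2) UNIV" by simp
  qed
  then have "\<And>j. \<bar>f j\<bar> \<le> sqrt (infsum (\<lambda>j. (f j)\<^sup>2) UNIV)"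
    using real_le_rsqrt real_sqrt_abs by (metis real_sqrt_le_mono)
  then show ?thesis unfolding bdd_def by blast
qed

lemma bdd_add: "bdd f \<Longrightarrow> bdd g \<Longrightarrow> bdd (\<lambda>j. f j + g j)"
  unfolding bdd_def by (metis abs_triangle_ineq add_mono order_trans)

lemma bdd_mult: "bdd f \<Longrightarrow> bdd g \<Longrightarrow> bdd (\<lambda>j. f j * g j)"
proof -
  assume "bdd f" "bdd g"
  then obtain M N where M: "\<And>j. \<bar>f j\<bar> \<le> M" and N: "\<And>j. \<bar>g j\<bar> \<le> N" unfolding bdd_def by blast
  have "\<And>j. \<bar>f j * g j\<bar> \<le> M * N"
    by (simp add: abs_mult M N mult_mono' abs_ge_zero order_trans[OF abs_ge_zero M])
  then show ?thesis unfolding bdd_def by blast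
qed

lemma bdd_shift: "bdd f \<Longrightarrow> bdd (\<lambda>j. f (j + a))"
  unfolding bdd_def by blast

lemma bdd_uminus: "bdd f \<Longrightarrow> bdd (\<lambda>j. - f j)"
  unfolding bdd_def by simp

lemma bdd_diff: "bdd f \<Longrightarrow> bdd g \<Longrightarrow> bdd (\<lambda>j. f j - g j)"
  using bdd_add[OF _ bdd_uminus, of f g] by simp

lemma bdd_div: "bdd f \<Longrightarrow> bdd (\<lambda>j. f j / c)"
  using bdd_mult[OF _ bdd_const, of f "1/c"] by simp

lemma bdd_power: "bdd f \<Longrightarrow> bdd (\<lambda>j. f j ^ n)"
  by (induction n) (simp_all add: bdd_const bdd_mult)

lemma l2_Dplus: "in_l2h f \<Longrightarrow> in_l2h (Dplus h f)"
  unfolding Dplus_def by (intro l2_div l2_diff l2_shift)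
lemma l2_Dminus: "in_l2h f \<Longrightarrow> in_l2h (Dminus h f)"
  unfolding Dminus_def using l2_shift[of f "-1"] by (intro l2_div l2_diff) simp_all
lemma l2_Dzero: "in_l2h f \<Longrightarrow> in_l2h (Dzero h f)"
  unfolding Dzero_def using l2_shift[of f "-1"] by (intro l2_div l2_diff l2_shift) simp_all
lemma l2_shiftp: "in_l2h f \<Longrightarrow> in_l2h (shiftp f)"
  unfolding shiftp_def by (rule l2_shift)
lemma l2_shiftm: "in_l2h f \<Longrightarrow> in_l2h (shiftm f)"
  unfolding shiftm_def using l2_shift[of f "-1"] by simp

lemma bdd_Dplus: "bdd f \<Longrightarrow> bdd (Dplus h f)"
  unfolding Dplus_def by (intro bdd_div bdd_diff bdd_shift)
lemma bdd_Dminus: "bdd f \<Longrightarrow> bdd (Dminus h f)"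
  unfolding Dminus_def using bdd_shift[of f "-1"] by (intro bdd_div bdd_diff) simp_all
lemma bdd_Dzero: "bdd f \<Longrightarrow> bdd (Dzero h f)"
  unfolding Dzero_def using bdd_shift[of f "-1"] by (intro bdd_div bdd_diff bdd_shift) simp_all

lemma l2_Fop:
  assumes "in_l2h v" shows "in_l2h (Fop k \<beta> h v)"
proof -
  have bv: "bdd v" using assms by (rule l2_imp_bdd)
  have "in_l2h (\<lambda>i. (v i) ^ (k + 1))"
    using l2_bmult[OF bdd_power[OF bv, of k] assms] by (simp add: mult.commute)
  then show ?thesis unfolding Fop_def
    by (intro l2_add l2_cmult l2_bmult[OF bdd_power[OF bv]] l2_Dplus l2_Dzero l2_Dminus assms)
qed

lemma telescope:
  fixes q :: gridfun
  assumes "q summable_on UNIV"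
  shows "infsum (\<lambda>j. q (j + 1) - q j) UNIV = 0"
proof -
  have s1: "(\<lambda>j. q (j + 1)) summable_on UNIV" using assms summable_shift by blast
  have "infsum (\<lambda>j. q (j + 1) + - q j) UNIV = infsum (\<lambda>j. q (j + 1)) UNIV + infsum (\<lambda>j. - q j) UNIV"
    by (rule infsum_add[OF s1 summable_on_uminus[THEN iffD2, OF assms]])
  also have "\<dots> = 0" by (simp add: infsum_uminus infsum_shift)
  finally show ?thesis by simp
qed


definition qfun :: "nat \<Rightarrow> real \<Rightarrow> real \<Rightarrow> gridfun \<Rightarrow> gridfun \<Rightarrow> gridfun" where
  "qfun k \<beta> h P v = (\<lambda>j.
     - (1/2) * \<beta> * ((real k + 1) / (real k + 2)) * (v (j - 1) ^ k * P j * v (j - 1) * v j)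
     - (1/2) * \<beta> * ((real k + 1) / (real k + 2)) * (v j ^ k * P (j - 1) * v (j - 1) * v j)
     + ((1/2) * P (j - 2) * v (j - 1) * v (j - 1) - (1/2) * P (j - 2) * v (j - 1) * v j
        - (3/2) * P (j - 1) * v (j - 1) * v (j - 1) + 3 * P (j - 1) * v (j - 1) * v j
        - (3/2) * P (j - 1) * v (j - 1) * v (j + 1) + (1/2) * P j * v (j - 2) * v j
        - (3/2) * P j * v (j - 1) * v j + P j * v j * v j) / h\<^sup>2)"

lemma pointwise:
  assumes "h \<noteq> 0"
  shows "h * (P j * v j * (- Fop k \<beta> h v j))
    + h * (Dminus h v j * (Dplus h P j * Dminus h v j))
    + (h/2) * (Dplus h v j * (Dminus h P j * Dplus h v j))
    + h*h * (Dplus h (Dminus h v) j * (P j * Dplus h (Dminus h v) j))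
    + (h*h/2) * (Dplus h (Dminus h v) j * (Dplus h P j * Dminus h v j))
    - (h*h/2) * ((Dplus h v j * Dminus h P j) * Dplus h (Dminus h v) j)
    + h * (Dminus h v j * (shiftm v j * Dzero h (Dminus h P) j))
    + h*h * (Dplus h (Dminus h v) j * (Dminus h P j * Dminus h v j))
    + h*h * (Dplus h (Dminus h v) j * (Dplus h P j * Dplus h v j))
    + h*h * (Dplus h (Dminus h v) j * (v j * Dplus h (Dminus h P) j))
    - (\<beta>/2) * ((real k + 1) / (real k + 2)) * h *
        ((v j) ^ (k + 1) * (shiftp v j * Dplus h P j + shiftm v j * Dminus h P j))
    = qfun k \<beta> h P v (j + 1) - qfun k \<beta> h P v j"
proof -
  define c where "c = (real k + 1) / (real k + 2)"
  have e1: "j + 1 - 1 = j" "j + 1 - 2 = j - 1" "j - 1 + 1 = j" "j - 1 - 1 = j - 2" "j + 1 + 1 = j + 2"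
    "j + 1 - 1 - 1 = j - 1" "j - 1 + 1 + 1 = j + 1" by simp_all
  show ?thesis
    unfolding qfun_def Fop_def Dplus_def Dminus_def Dzero_def shiftp_def shiftm_def c_def[symmetric]
    using assms
    apply (simp only: e1 power_add power_one_right)
    apply (simp add: field_simps power2_eq_square power3_eq_cube)
    done
qed

lemma has_sum_diff':
  fixes f g :: "int \<Rightarrow> real"
  assumes "(f has_sum a) A" "(g has_sum b) A"
  shows "((\<lambda>x. f x - g x) has_sum (a - b)) A"
  using has_sum_add[OF assms(1) has_sum_uminus[where f=g and a="-b", THEN iffD2]] assms(2) by simp

lemma summable_on_diff':
  fixes f g :: "int \<Rightarrow> real"
  assumes "f summable_on A" "g summable_on A"
  shows "(\<lambda>x. f x - g x) summable_on A"
  using summable_on_add[OF assms(1) summable_on_uminus[THEN iffD2, OF assms(2)]] by simp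

lemma summable_on_uminus': "(f::int\<Rightarrow>real) summable_on A \<Longrightarrow> (\<lambda>x. - f x) summable_on A"
  using summable_on_uminus by blast

lemma summable_on_cdiv:
  fixes f :: "int \<Rightarrow> real"
  assumes "f summable_on A" shows "(\<lambda>x. f x / c) summable_on A"
  using summable_on_cmult_right[OF assms, of "1/c"] by simp

lemma summable_bff:
  assumes "bdd b" "in_l2h f" "in_l2h g"
  shows "(\<lambda>j. b j * f j * g j) summable_on UNIV"
  using l2_prod_summable[OF l2_bmult[OF assms(1,2)] assms(3)] by (simp add: mult.assoc)

lemma bdd_shift': "bdd f \<Longrightarrow> bdd (\<lambda>j. f (j - a))"
  using bdd_shift[of f "-a"] by simp

lemma l2_shift': "in_l2h f \<Longrightarrow> in_l2h (\<lambda>j. f (j - a))"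
  using l2_shift[of f "-a"] by simp

lemma l2_id: "in_l2h f \<Longrightarrow> in_l2h (\<lambda>j. f j)" by simp
lemma bdd_id: "bdd f \<Longrightarrow> bdd (\<lambda>j. f j)" by simp

lemma q_summable:
  assumes v: "in_l2h v" and P: "bdd P"
  shows "qfun k \<beta> h P v summable_on UNIV"
proof -
  have bv: "bdd v" using v by (rule l2_imp_bdd)
  show ?thesis unfolding qfun_def
    apply (intro summable_on_add summable_on_diff' summable_on_cmult_right summable_on_cdiv summable_on_uminus' summable_bff)
    apply (intro bdd_mult bdd_const bdd_power bdd_shift' bdd_shift l2_shift' l2_shift bv v P)+
    done
qed

lemma telescope_has_sum:
  fixes q :: gridfun
  assumes "q summable_on UNIV"
  shows "((\<lambda>j. q (j + 1) - q j) has_sum 0) UNIV"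
proof -
  have "(\<lambda>j. q (j + 1) - q j) summable_on UNIV"
    using assms summable_shift by (intro summable_on_diff') blast+
  then show ?thesis using telescope[OF assms] has_sum_infsum by fastforce
qed

lemma identity:
  assumes v: "in_l2h v" and P: "bdd P" and h: "h \<noteq> 0"
  shows "h * infsum (\<lambda>j. P j * v j * (- Fop k \<beta> h v j)) UNIV
    + h * infsum (\<lambda>j. Dminus h v j * (Dplus h P j * Dminus h v j)) UNIV
    + (h/2) * infsum (\<lambda>j. Dplus h v j * (Dminus h P j * Dplus h v j)) UNIV
    + h*h * infsum (\<lambda>j. Dplus h (Dminus h v) j * (P j * Dplus h (Dminus h v) j)) UNIV
    + (h*h/2) * infsum (\<lambda>j. Dplus h (Dminus h v) j * (Dplus h P j * Dminus h v j)) UNIV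
    - (h*h/2) * infsum (\<lambda>j. (Dplus h v j * Dminus h P j) * Dplus h (Dminus h v) j) UNIV
    + h * infsum (\<lambda>j. Dminus h v j * (shiftm v j * Dzero h (Dminus h P) j)) UNIV
    + h*h * infsum (\<lambda>j. Dplus h (Dminus h v) j * (Dminus h P j * Dminus h v j)) UNIV
    + h*h * infsum (\<lambda>j. Dplus h (Dminus h v) j * (Dplus h P j * Dplus h v j)) UNIV
    + h*h * infsum (\<lambda>j. Dplus h (Dminus h v) j * (v j * Dplus h (Dminus h P) j)) UNIV
    - (\<beta>/2) * ((real k + 1) / (real k + 2)) * h *
        infsum (\<lambda>j. (v j) ^ (k + 1) * (shiftp v j * Dplus h P j + shiftm v j * Dminus h P j)) UNIV
    = 0"
proof -
  have bv: "bdd v" using v by (rule l2_imp_bdd)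
  have lF: "in_l2h (\<lambda>j. - Fop k \<beta> h v j)" by (intro l2_uminus l2_Fop v)
  have lvk: "in_l2h (\<lambda>j. (v j) ^ (k + 1))"
    using l2_bmult[OF bdd_power[OF bv, of k] v] by (simp add: mult.commute)
  have lDm: "in_l2h (Dminus h v)" "in_l2h (Dplus h v)" "in_l2h (Dplus h (Dminus h v))"
    using v by (simp_all add: l2_Dminus l2_Dplus)
  have bP: "bdd (Dplus h P)" "bdd (Dminus h P)" "bdd (Dzero h (Dminus h P))" "bdd (Dplus h (Dminus h P))"
    using P by (simp_all add: bdd_Dplus bdd_Dminus bdd_Dzero)
  have s0: "(\<lambda>j. P j * v j * (- Fop k \<beta> h v j)) summable_on UNIV"
    using summable_bff[OF P v lF] .
  have s1: "(\<lambda>j. Dminus h v j * (Dplus h P j * Dminus h v j)) summable_on UNIV"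
    by (intro l2_prod_summable lDm l2_bmult bP)
  have s2: "(\<lambda>j. Dplus h v j * (Dminus h P j * Dplus h v j)) summable_on UNIV"
    by (intro l2_prod_summable lDm l2_bmult bP)
  have s3: "(\<lambda>j. Dplus h (Dminus h v) j * (P j * Dplus h (Dminus h v) j)) summable_on UNIV"
    by (intro l2_prod_summable lDm l2_bmult P)
  have s4: "(\<lambda>j. Dplus h (Dminus h v) j * (Dplus h P j * Dminus h v j)) summable_on UNIV"
    by (intro l2_prod_summable lDm l2_bmult bP)
  have s5: "(\<lambda>j. (Dplus h v j * Dminus h P j) * Dplus h (Dminus h v) j) summable_on UNIV"
    by (intro l2_prod_summable lDm l2_bmult' bP)
  have s6: "(\<lambda>j. Dminus h v j * (shiftm v j * Dzero h (Dminus h P) j)) summable_on UNIV"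
    by (intro l2_prod_summable lDm l2_bmult' bP l2_shiftm v)
  have s7: "(\<lambda>j. Dplus h (Dminus h v) j * (Dminus h P j * Dminus h v j)) summable_on UNIV"
    by (intro l2_prod_summable lDm l2_bmult bP)
  have s8: "(\<lambda>j. Dplus h (Dminus h v) j * (Dplus h P j * Dplus h v j)) summable_on UNIV"
    by (intro l2_prod_summable lDm l2_bmult bP)
  have s9: "(\<lambda>j. Dplus h (Dminus h v) j * (v j * Dplus h (Dminus h P) j)) summable_on UNIV"
    by (intro l2_prod_summable lDm l2_bmult' bP v)
  have s10: "(\<lambda>j. (v j) ^ (k + 1) * (shiftp v j * Dplus h P j + shiftm v j * Dminus h P j)) summable_on UNIV"
    by (intro l2_prod_summable lvk l2_add l2_bmult' bP l2_shiftm l2_shiftp v)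
  let ?E = "\<lambda>j. h * (P j * v j * (- Fop k \<beta> h v j))
    + h * (Dminus h v j * (Dplus h P j * Dminus h v j))
    + (h/2) * (Dplus h v j * (Dminus h P j * Dplus h v j))
    + h*h * (Dplus h (Dminus h v) j * (P j * Dplus h (Dminus h v) j))
    + (h*h/2) * (Dplus h (Dminus h v) j * (Dplus h P j * Dminus h v j))
    - (h*h/2) * ((Dplus h v j * Dminus h P j) * Dplus h (Dminus h v) j)
    + h * (Dminus h v j * (shiftm v j * Dzero h (Dminus h P) j))
    + h*h * (Dplus h (Dminus h v) j * (Dminus h P j * Dminus h v j))
    + h*h * (Dplus h (Dminus h v) j * (Dplus h P j * Dplus h v j))
    + h*h * (Dplus h (Dminus h v) j * (v j * Dplus h (Dminus h P) j))
    - (\<beta>/2) * ((real k + 1) / (real k + 2)) * h *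
        ((v j) ^ (k + 1) * (shiftp v j * Dplus h P j + shiftm v j * Dminus h P j))"
  have A: "(?E has_sum (h * infsum (\<lambda>j. P j * v j * (- Fop k \<beta> h v j)) UNIV
    + h * infsum (\<lambda>j. Dminus h v j * (Dplus h P j * Dminus h v j)) UNIV
    + (h/2) * infsum (\<lambda>j. Dplus h v j * (Dminus h P j * Dplus h v j)) UNIV
    + h*h * infsum (\<lambda>j. Dplus h (Dminus h v) j * (P j * Dplus h (Dminus h v) j)) UNIV
    + (h*h/2) * infsum (\<lambda>j. Dplus h (Dminus h v) j * (Dplus h P j * Dminus h v j)) UNIV
    - (h*h/2) * infsum (\<lambda>j. (Dplus h v j * Dminus h P j) * Dplus h (Dminus h v) j) UNIV
    + h * infsum (\<lambda>j. Dminus h v j * (shiftm v j * Dzero h (Dminus h P) j)) UNIV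
    + h*h * infsum (\<lambda>j. Dplus h (Dminus h v) j * (Dminus h P j * Dminus h v j)) UNIV
    + h*h * infsum (\<lambda>j. Dplus h (Dminus h v) j * (Dplus h P j * Dplus h v j)) UNIV
    + h*h * infsum (\<lambda>j. Dplus h (Dminus h v) j * (v j * Dplus h (Dminus h P) j)) UNIV
    - (\<beta>/2) * ((real k + 1) / (real k + 2)) * h *
        infsum (\<lambda>j. (v j) ^ (k + 1) * (shiftp v j * Dplus h P j + shiftm v j * Dminus h P j)) UNIV)) UNIV"
    by (intro has_sum_add has_sum_diff' has_sum_cmult_right has_sum_infsum s0 s1 s2 s3 s4 s5 s6 s7 s8 s9 s10)
  have B: "(?E has_sum 0) UNIV"
  proof -
    have "?E = (\<lambda>j. qfun k \<beta> h P v (j + 1) - qfun k \<beta> h P v j)"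
      using pointwise[OF h] by presburger
    then show ?thesis using telescope_has_sum[OF q_summable[OF v P]] by simp
  qed
  show ?thesis using has_sum_unique[OF A B] .
qed


lemma abs5: "\<bar>a+b+c+d+e\<bar> \<le> \<bar>a\<bar>+\<bar>b\<bar>+\<bar>c\<bar>+\<bar>d\<bar>+\<bar>(e::real)\<bar>"
  using abs_triangle_ineq[of "a+b+c+d" e] abs_triangle_ineq[of "a+b+c" d]
    abs_triangle_ineq[of "a+b" c] abs_triangle_ineq[of a b] by linarith

lemma sq5: "(a+b+c+d+e)\<^sup>2 \<le> 5 * (a\<^sup>2+b\<^sup>2+c\<^sup>2+d\<^sup>2+(e::real)\<^sup>2)"
proof -
  have "0 \<le> (a-b)\<^sup>2 + (a-c)\<^sup>2 + (a-d)\<^sup>2 + (a-e)\<^sup>2 + (b-c)\<^sup>2 + (b-d)\<^sup>2 + (b-e)\<^sup>2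
     + (c-d)\<^sup>2 + (c-e)\<^sup>2 + (d-e)\<^sup>2" by simp
  then show ?thesis by (simp add: power2_eq_square algebra_simps)
qed

lemma Fop_pw_bound:
  assumes M: "\<And>i. \<bar>f i\<bar> \<le> M" and h: "h > 0"
  shows "\<bar>Fop k \<beta> h f j\<bar> \<le> (6 / h^3 + \<bar>\<beta>\<bar> * M^k / h) *
     (\<bar>f (j+2)\<bar> + \<bar>f (j+1)\<bar> + \<bar>f j\<bar> + \<bar>f (j-1)\<bar> + \<bar>f (j-2)\<bar>)"
proof -
  define x2 where "x2 = f (j+2)"
  define x1 where "x1 = f (j+1)"
  define x0 where "x0 = f j"
  define y1 where "y1 = f (j-1)"
  define y2 where "y2 = f (j-2)"
  define c where "c = (real k + 1) / (real k + 2)"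
  have c: "0 \<le> c" "c \<le> 1" unfolding c_def by simp_all
  have e1: "j + 1 - 1 = j" "j + 1 - 2 = j - 1" "j - 1 + 1 = j" "j - 1 - 1 = j - 2" "j + 1 + 1 = j + 2"
    "j + 1 - 1 - 1 = j - 1" "j - 1 + 1 + 1 = j + 1" "j + 1 + 1 - 1 = j + 1" "j - 1 - 1 + 1 = j - 1"
    "j + 1 - 1 + 1 = j + 1"  by simp_all
  have eq: "Fop k \<beta> h f j = ((3/2)*x2 - 5*x1 + 6*x0 - 3*y1 + (1/2)*y2) / h^3
      + \<beta> * c * (x0^k * (x1 - y1) / (2*h) + (x1^k*x1 - y1^k*y1) / (2*h))"
    unfolding Fop_def Dplus_def Dminus_def Dzero_def c_def[symmetric] x2_def x1_def x0_def y1_def y2_def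
    using h by (simp add: e1 field_simps power3_eq_cube)
  have M0: "0 \<le> M" using M[of j] by linarith
  have L: "\<bar>((3/2)*x2 - 5*x1 + 6*x0 - 3*y1 + (1/2)*y2) / h^3\<bar>
      \<le> 6 / h^3 * (\<bar>x2\<bar> + \<bar>x1\<bar> + \<bar>x0\<bar> + \<bar>y1\<bar> + \<bar>y2\<bar>)"
  proof -
    have "\<bar>(3/2)*x2 + (-5*x1) + 6*x0 + (-3*y1) + (1/2)*y2\<bar> \<le> \<bar>(3/2)*x2\<bar>+\<bar>-5*x1\<bar>+\<bar>6*x0\<bar>+\<bar>-3*y1\<bar>+\<bar>(1/2)*y2\<bar>"
      by (rule abs5)
    also have "\<dots> \<le> 6 * (\<bar>x2\<bar> + \<bar>x1\<bar> + \<bar>x0\<bar> + \<bar>y1\<bar> + \<bar>y2\<bar>)"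
      by (simp add: abs_mult)
    finally have "\<bar>(3/2)*x2 - 5*x1 + 6*x0 - 3*y1 + (1/2)*y2\<bar> \<le> 6 * (\<bar>x2\<bar> + \<bar>x1\<bar> + \<bar>x0\<bar> + \<bar>y1\<bar> + \<bar>y2\<bar>)"
      by simp
    then show ?thesis using h by (simp add: abs_divide divide_right_mono)
  qed
  have pk: "\<And>i. \<bar>f i ^ k\<bar> \<le> M^k"
    by (simp add: power_abs power_mono M)
  have N1: "\<bar>x0^k * (x1 - y1) / (2*h)\<bar> \<le> M^k * (\<bar>x1\<bar> + \<bar>y1\<bar>) / (2*h)"
  proof -
    have "\<bar>x0^k * (x1 - y1)\<bar> \<le> M^k * (\<bar>x1\<bar> + \<bar>y1\<bar>)"
      unfolding abs_mult using pk[of j] x0_def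
      by (intro mult_mono) (auto simp: abs_triangle_ineq4)
    then show ?thesis using h by (simp add: abs_divide divide_right_mono)
  qed
  have N2: "\<bar>(x1^k*x1 - y1^k*y1) / (2*h)\<bar> \<le> M^k * (\<bar>x1\<bar> + \<bar>y1\<bar>) / (2*h)"
  proof -
    have a: "\<bar>x1^k*x1\<bar> \<le> M^k * \<bar>x1\<bar>" unfolding abs_mult using pk[of "j+1"] x1_def
      by (intro mult_right_mono) auto
    have b: "\<bar>y1^k*y1\<bar> \<le> M^k * \<bar>y1\<bar>" unfolding abs_mult using pk[of "j-1"] y1_def
      by (intro mult_right_mono) auto
    have "\<bar>x1^k*x1 - y1^k*y1\<bar> \<le> M^k * (\<bar>x1\<bar> + \<bar>y1\<bar>)"
      using abs_triangle_ineq4[of "x1^k*x1" "y1^k*y1"] a b by (simp add: algebra_simps)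
    then show ?thesis using h by (simp add: abs_divide divide_right_mono)
  qed
  have N: "\<bar>\<beta> * c * (x0^k * (x1 - y1) / (2*h) + (x1^k*x1 - y1^k*y1) / (2*h))\<bar>
     \<le> \<bar>\<beta>\<bar> * M^k / h * (\<bar>x2\<bar> + \<bar>x1\<bar> + \<bar>x0\<bar> + \<bar>y1\<bar> + \<bar>y2\<bar>)"
  proof -
    have s: "\<bar>x0^k * (x1 - y1) / (2*h) + (x1^k*x1 - y1^k*y1) / (2*h)\<bar> \<le> M^k * (\<bar>x1\<bar> + \<bar>y1\<bar>) / h"
    proof -
      have "M^k * (\<bar>x1\<bar> + \<bar>y1\<bar>) / h = M^k * (\<bar>x1\<bar> + \<bar>y1\<bar>) / (2*h) + M^k * (\<bar>x1\<bar> + \<bar>y1\<bar>) / (2*h)"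
        by (simp add: field_simps)
      then show ?thesis
        using abs_triangle_ineq[of "x0^k * (x1 - y1) / (2*h)" "(x1^k*x1 - y1^k*y1) / (2*h)"] N1 N2
        by linarith
    qed
    have "\<bar>\<beta> * c * (x0^k * (x1 - y1) / (2*h) + (x1^k*x1 - y1^k*y1) / (2*h))\<bar>
       \<le> \<bar>\<beta>\<bar> * 1 * (M^k * (\<bar>x1\<bar> + \<bar>y1\<bar>) / h)"
      unfolding abs_mult using c s by (intro mult_mono) auto
    also have "\<dots> \<le> \<bar>\<beta>\<bar> * M^k / h * (\<bar>x2\<bar> + \<bar>x1\<bar> + \<bar>x0\<bar> + \<bar>y1\<bar> + \<bar>y2\<bar>)"
    proof -
      have "0 \<le> \<bar>\<beta>\<bar> * M^k / h" using M0 h by simp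
      then have "\<bar>\<beta>\<bar> * M^k / h * (\<bar>x1\<bar> + \<bar>y1\<bar>) \<le> \<bar>\<beta>\<bar> * M^k / h * (\<bar>x2\<bar> + \<bar>x1\<bar> + \<bar>x0\<bar> + \<bar>y1\<bar> + \<bar>y2\<bar>)"
        by (intro mult_left_mono) auto
      then show ?thesis by simp
    qed
    finally show ?thesis .
  qed
  show ?thesis unfolding eq x2_def[symmetric] x1_def[symmetric] x0_def[symmetric] y1_def[symmetric] y2_def[symmetric]
    using abs_triangle_ineq[of "((3/2)*x2 - 5*x1 + 6*x0 - 3*y1 + (1/2)*y2) / h^3"
      "\<beta> * c * (x0^k * (x1 - y1) / (2*h) + (x1^k*x1 - y1^k*y1) / (2*h))"] L N
    by (simp add: algebra_simps)
qed

lemma Fop_sq_bound: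
  assumes M: "\<And>i. \<bar>f i\<bar> \<le> M" and h: "h > 0"
  shows "(Fop k \<beta> h f j)\<^sup>2 \<le> 5 * (6 / h^3 + \<bar>\<beta>\<bar> * M^k / h)\<^sup>2 *
     ((f (j+2))\<^sup>2 + (f (j+1))\<^sup>2 + (f j)\<^sup>2 + (f (j-1))\<^sup>2 + (f (j-2))\<^sup>2)"
proof -
  let ?A = "6 / h^3 + \<bar>\<beta>\<bar> * M^k / h"
  let ?S = "\<bar>f (j+2)\<bar> + \<bar>f (j+1)\<bar> + \<bar>f j\<bar> + \<bar>f (j-1)\<bar> + \<bar>f (j-2)\<bar>"
  have M0: "0 \<le> M" using M[of j] by linarith
  have A0: "0 \<le> ?A" using h M0 by simp
  have "(Fop k \<beta> h f j)\<^sup>2 = \<bar>Fop k \<beta> h f j\<bar>\<^sup>2" by simp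
  also have "\<dots> \<le> (?A * ?S)\<^sup>2"
    by (rule power_mono[OF Fop_pw_bound[OF M h]]) simp
  also have "\<dots> = ?A\<^sup>2 * ?S\<^sup>2" by (simp add: power_mult_distrib)
  also have "\<dots> \<le> ?A\<^sup>2 * (5 * ((f (j+2))\<^sup>2 + (f (j+1))\<^sup>2 + (f j)\<^sup>2 + (f (j-1))\<^sup>2 + (f (j-2))\<^sup>2))"
    using sq5[of "\<bar>f (j+2)\<bar>" "\<bar>f (j+1)\<bar>" "\<bar>f j\<bar>" "\<bar>f (j-1)\<bar>" "\<bar>f (j-2)\<bar>"]
    by (intro mult_left_mono) simp_all
  finally have "(Fop k \<beta> h f j)\<^sup>2 \<le> ?A\<^sup>2 * (5 * ((f (j+2))\<^sup>2 + (f (j+1))\<^sup>2 + (f j)\<^sup>2 + (f (j-1))\<^sup>2 + (f (j-2))\<^sup>2))" .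
  then show ?thesis by (simp only: mult.assoc mult.left_commute)
qed

lemma Fop_l2_bound:
  assumes f: "in_l2h f" and M: "\<And>i. \<bar>f i\<bar> \<le> M" and h: "h > 0"
  shows "infsum (\<lambda>j. (Fop k \<beta> h f j)\<^sup>2) UNIV \<le> 25 * (6 / h^3 + \<bar>\<beta>\<bar> * M^k / h)\<^sup>2 *
     infsum (\<lambda>j. (f j)\<^sup>2) UNIV"
proof -
  let ?C = "5 * (6 / h^3 + \<bar>\<beta>\<bar> * M^k / h)\<^sup>2"
  have sf: "(\<lambda>j. (f j)\<^sup>2) summable_on UNIV" using f unfolding in_l2h_def .
  have ss: "\<And>a. (\<lambda>j. (f (j + a))\<^sup>2) summable_on UNIV" using l2_shift[OF f] unfolding in_l2h_def by blast
  have ss': "(\<lambda>j. (f (j - a))\<^sup>2) summable_on UNIV" for a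
  proof -
    have "(\<lambda>j. (f (j - a))\<^sup>2) = (\<lambda>j. (f (j + (-a)))\<^sup>2)" by simp
    then show ?thesis using ss[of "-a"] by simp
  qed
  have is': "infsum (\<lambda>j. (f (j - a))\<^sup>2) UNIV = infsum (\<lambda>j. (f j)\<^sup>2) UNIV" for a
  proof -
    have "(\<lambda>j. (f (j - a))\<^sup>2) = (\<lambda>j. (f (j + (-a)))\<^sup>2)" by simp
    then show ?thesis using infsum_shift[of "\<lambda>j. (f j)\<^sup>2" "-a"] by simp
  qed
  have "infsum (\<lambda>j. (Fop k \<beta> h f j)\<^sup>2) UNIV \<le>
     infsum (\<lambda>j. ?C * ((f (j+2))\<^sup>2 + (f (j+1))\<^sup>2 + (f j)\<^sup>2 + (f (j-1))\<^sup>2 + (f (j-2))\<^sup>2)) UNIV"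
    apply (rule infsum_mono)
      apply (use l2_Fop[OF f, of k \<beta> h] in \<open>simp add: in_l2h_def\<close>)
     apply (intro summable_on_cmult_right summable_on_add ss ss' sf)
    apply (rule Fop_sq_bound[OF M h])
    done
  also have "\<dots> = ?C * (infsum (\<lambda>j. (f (j+2))\<^sup>2) UNIV + infsum (\<lambda>j. (f (j+1))\<^sup>2) UNIV
      + infsum (\<lambda>j. (f j)\<^sup>2) UNIV + infsum (\<lambda>j. (f (j-1))\<^sup>2) UNIV + infsum (\<lambda>j. (f (j-2))\<^sup>2) UNIV)"
    by (subst infsum_cmult_right, intro summable_on_add ss ss' sf,
        simp add: infsum_add summable_on_add ss ss' sf)
  also have "\<dots> = 25 * (6 / h^3 + \<bar>\<beta>\<bar> * M^k / h)\<^sup>2 * infsum (\<lambda>j. (f j)\<^sup>2) UNIV"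
    using infsum_shift[of "\<lambda>j. (f j)\<^sup>2" 2] infsum_shift[of "\<lambda>j. (f j)\<^sup>2" 1] by (simp add: is')
  finally show ?thesis .
qed


lemma sq_le_infsum:
  assumes "in_l2h f" shows "(f j)\<^sup>2 \<le> infsum (\<lambda>j. (f j)\<^sup>2) UNIV"
proof -
  have "sum (\<lambda>j. (f j)\<^sup>2) {j} \<le> infsum (\<lambda>j. (f j)\<^sup>2) UNIV"
    using assms unfolding in_l2h_def by (intro finite_sum_le_infsum) auto
  then show ?thesis by simp
qed

lemma infsum_sq_nonneg: "0 \<le> infsum (\<lambda>j. (f j)\<^sup>2) S"
  for f :: gridfun by (intro infsum_nonneg) simp

lemma cs_bound:
  fixes f g :: gridfun
  assumes sf: "(\<lambda>j. (f j)\<^sup>2) summable_on S" and sg: "(\<lambda>j. (g j)\<^sup>2) summable_on S" and th: "\<theta> > 0"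
  shows "\<bar>infsum (\<lambda>j. f j * g j) S\<bar> \<le> infsum (\<lambda>j. (f j)\<^sup>2) S / (2*\<theta>) + \<theta>/2 * infsum (\<lambda>j. (g j)\<^sup>2) S"
proof -
  define b where "b = (\<lambda>j. (1/(2*\<theta>)) * (f j)\<^sup>2 + \<theta>/2 * (g j)\<^sup>2)"
  have sb: "b summable_on S" unfolding b_def
    by (intro summable_on_add summable_on_cmult_right summable_on_cdiv sf sg)
  have pw: "\<bar>f j * g j\<bar> \<le> b j" for j
  proof -
    have "0 \<le> (\<bar>f j\<bar> - \<theta> * \<bar>g j\<bar>)\<^sup>2" by simp
    then have "2*\<theta>*(\<bar>f j\<bar>*\<bar>g j\<bar>) \<le> (f j)\<^sup>2 + \<theta>\<^sup>2 * (g j)\<^sup>2"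
      by (simp add: power2_diff power_mult_distrib algebra_simps)
    then have "\<bar>f j\<bar>*\<bar>g j\<bar> \<le> ((f j)\<^sup>2 + \<theta>\<^sup>2 * (g j)\<^sup>2) / (2*\<theta>)"
      using th by (simp add: field_simps)
    also have "\<dots> = b j" unfolding b_def using th by (simp add: field_simps power2_eq_square)
    finally show ?thesis by (simp add: abs_mult)
  qed
  have sfg: "(\<lambda>j. f j * g j) summable_on S"
  proof -
    have "(\<lambda>j. norm (f j * g j)) summable_on S"
      by (rule summable_on_comparison_test[OF sb]) (use pw in auto)
    then show ?thesis by (rule abs_summable_summable)
  qed
  have up: "infsum (\<lambda>j. f j * g j) S \<le> infsum b S"
    by (rule infsum_mono[OF sfg sb]) (use pw in \<open>auto simp: abs_le_iff\<close>)
  have lo: "infsum (\<lambda>j. - b j) S \<le> infsum (\<lambda>j. f j * g j) S"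
  proof (rule infsum_mono[OF summable_on_uminus' [OF sb] sfg])
    fix j show "- b j \<le> f j * g j" using pw[of j] by (simp add: abs_le_iff)
  qed
  have ib: "infsum b S = infsum (\<lambda>j. (f j)\<^sup>2) S / (2*\<theta>) + \<theta>/2 * infsum (\<lambda>j. (g j)\<^sup>2) S"
  proof -
    have "infsum b S = infsum (\<lambda>j. (1/(2*\<theta>)) * (f j)\<^sup>2) S + infsum (\<lambda>j. \<theta>/2 * (g j)\<^sup>2) S"
      unfolding b_def by (intro infsum_add summable_on_cmult_right sf sg)
    also have "\<dots> = (1/(2*\<theta>)) * infsum (\<lambda>j. (f j)\<^sup>2) S + \<theta>/2 * infsum (\<lambda>j. (g j)\<^sup>2) S"
      using sf sg by (simp only: infsum_cmult_right)
    finally show ?thesis by simp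
  qed
  show ?thesis using up lo ib by (simp add: infsum_uminus)
qed


lemma amgm: "(e::real) * (x * y) \<le> x\<^sup>2 / 2 + e\<^sup>2 * y\<^sup>2 / 2"
proof -
  have "0 \<le> (x - e*y)\<^sup>2" by simp
  moreover have "(x - e*y)\<^sup>2 = x\<^sup>2 - 2*(e*(x*y)) + e\<^sup>2*y\<^sup>2"
    by (simp add: power2_eq_square algebra_simps)
  ultimately show ?thesis by linarith
qed

lemma lip:
  fixes u :: "real \<Rightarrow> gridfun"
  assumes l2: "\<And>r. r \<in> {0<..<T} \<Longrightarrow> in_l2h (u r)"
    and der: "\<And>r j. r \<in> {0<..<T} \<Longrightarrow> ((\<lambda>s. u s j) has_real_derivative (- Fop k \<beta> h (u r) j)) (at r)"
    and d: "\<delta> \<le> t" "\<delta> \<le> T - t"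
    and Bb: "\<And>r. \<bar>r - t\<bar> < \<delta> \<Longrightarrow> infsum (\<lambda>j. (Fop k \<beta> h (u r) j)\<^sup>2) UNIV \<le> B"
    and s: "\<bar>s - t\<bar> < \<delta>"
  shows "infsum (\<lambda>j. (u s j - u t j)\<^sup>2) UNIV \<le> B * (s - t)\<^sup>2"
proof -
  have inT: "r \<in> {0<..<T}" if "\<bar>r - t\<bar> < \<delta>" for r using that d by auto
  have ls: "in_l2h (\<lambda>j. u s j - u t j)"
    using s by (intro l2_diff l2 inT) auto
  show ?thesis
  proof (rule infsum_le_finite_sums)
    show "(\<lambda>j. (u s j - u t j)\<^sup>2) summable_on UNIV" using ls unfolding in_l2h_def .
    fix J :: "int set" assume J: "finite J"
    define c where "c = (\<lambda>j. u s j - u t j)"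
    define \<phi> where "\<phi> = (\<lambda>r. \<Sum>j\<in>J. c j * u r j)"
    define \<phi>' where "\<phi>' = (\<lambda>r. \<Sum>j\<in>J. c j * (- Fop k \<beta> h (u r) j))"
    have D: "(\<phi> has_real_derivative \<phi>' r) (at r)" if "\<bar>r - t\<bar> < \<delta>" for r
      unfolding \<phi>_def \<phi>'_def
      by (intro DERIV_sum DERIV_cmult der inT that)
    obtain \<xi> where \<xi>: "\<bar>\<xi> - t\<bar> < \<delta>" and eq: "\<phi> s - \<phi> t = (s - t) * \<phi>' \<xi>"
    proof (cases "s < t")
      case True
      obtain z where "s < z" "z < t" "\<phi> t - \<phi> s = (t - s) * \<phi>' z"
        using MVT2[OF True, of \<phi> \<phi>'] D s by force
      then show ?thesis using that[of z] s by (auto simp: algebra_simps)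
    next
      case False
      show ?thesis
      proof (cases "s = t")
        case True then show ?thesis using that[of t] d s by auto
      next
        case False
        then have "t < s" using \<open>\<not> s < t\<close> by simp
        then obtain z where "t < z" "z < s" "\<phi> s - \<phi> t = (s - t) * \<phi>' z"
          using MVT2[OF \<open>t < s\<close>, of \<phi> \<phi>'] D s by force
        then show ?thesis using that[of z] s by (auto simp: algebra_simps)
      qed
    qed
    define g where "g = (\<lambda>j. - Fop k \<beta> h (u \<xi>) j)"
    have lhs: "\<phi> s - \<phi> t = (\<Sum>j\<in>J. (c j)\<^sup>2)"
      unfolding \<phi>_def by (simp add: sum_subtractf[symmetric] c_def power2_eq_square algebra_simps)
    have rhs: "(s - t) * \<phi>' \<xi> = (\<Sum>j\<in>J. (s - t) * (c j * g j))"
      unfolding \<phi>'_def g_def by (simp add: sum_distrib_left)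
    have pw: "(s - t) * (c j * g j) \<le> (c j)\<^sup>2 / 2 + (s - t)\<^sup>2 * (g j)\<^sup>2 / 2" for j
      by (rule amgm)
    have gb: "(\<Sum>j\<in>J. (g j)\<^sup>2) \<le> B"
    proof -
      have "(\<Sum>j\<in>J. (g j)\<^sup>2) \<le> infsum (\<lambda>j. (g j)\<^sup>2) UNIV"
        using l2_Fop[OF l2[OF inT[OF \<xi>]], of k \<beta> h] J unfolding g_def in_l2h_def
        by (intro finite_sum_le_infsum) auto
      also have "\<dots> \<le> B" using Bb[OF \<xi>] unfolding g_def by simp
      finally show ?thesis .
    qed
    have "(\<Sum>j\<in>J. (c j)\<^sup>2) = (\<Sum>j\<in>J. (s - t) * (c j * g j))"
      using lhs rhs eq by simp
    also have "\<dots> \<le> (\<Sum>j\<in>J. (c j)\<^sup>2 / 2 + (s - t)\<^sup>2 * (g j)\<^sup>2 / 2)"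
      by (rule sum_mono) (rule pw)
    also have "\<dots> = (\<Sum>j\<in>J. (c j)\<^sup>2) / 2 + (s - t)\<^sup>2 * (\<Sum>j\<in>J. (g j)\<^sup>2) / 2"
      by (simp add: sum.distrib sum_divide_distrib sum_distrib_left)
    finally have "(\<Sum>j\<in>J. (c j)\<^sup>2) \<le> (s - t)\<^sup>2 * (\<Sum>j\<in>J. (g j)\<^sup>2)" by simp
    also have "\<dots> \<le> (s - t)\<^sup>2 * B" using gb by (intro mult_left_mono) auto
    finally show "(\<Sum>j\<in>J. (u s j - u t j)\<^sup>2) \<le> B * (s - t)\<^sup>2" unfolding c_def by (simp add: mult.commute)
  qed
qed



lemma bounds:
  fixes u :: "real \<Rightarrow> gridfun"
  assumes h: "h > 0" and t: "0 < t" "t < T"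
    and l2: "\<And>r. r \<in> {0<..<T} \<Longrightarrow> in_l2h (u r)"
    and cont: "((\<lambda>s. infsum (\<lambda>j. (u s j - u t j)\<^sup>2) UNIV) \<longlongrightarrow> 0) (at t)"
  shows "\<exists>\<delta> B. \<delta> > 0 \<and> 0 \<le> B \<and> \<delta> \<le> t \<and> \<delta> \<le> T - t \<and>
     (\<forall>r. \<bar>r - t\<bar> < \<delta> \<longrightarrow> infsum (\<lambda>j. (Fop k \<beta> h (u r) j)\<^sup>2) UNIV \<le> B)"
proof -
  have "eventually (\<lambda>s. dist (infsum (\<lambda>j. (u s j - u t j)\<^sup>2) UNIV) 0 < 1) (at t)"
    by (rule tendstoD[OF cont]) simp
  then obtain d0 where d0: "d0 > 0"
    and d0': "\<And>s. s \<noteq> t \<Longrightarrow> dist s t < d0 \<Longrightarrow> dist (infsum (\<lambda>j. (u s j - u t j)\<^sup>2) UNIV) 0 < 1"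
    unfolding eventually_at by auto
  define \<delta> where "\<delta> = min d0 (min t (T - t))"
  define v where "v = u t"
  have lv: "in_l2h v" unfolding v_def using t by (intro l2) auto
  define K where "K = 2 + 2 * infsum (\<lambda>j. (v j)\<^sup>2) UNIV"
  have K0: "0 \<le> K" unfolding K_def using infsum_sq_nonneg[of v UNIV] by simp
  have inT: "r \<in> {0<..<T}" if "\<bar>r - t\<bar> < \<delta>" for r using that unfolding \<delta>_def by auto
  have Kb: "infsum (\<lambda>j. (u r j)\<^sup>2) UNIV \<le> K" if r: "\<bar>r - t\<bar> < \<delta>" for r
  proof (cases "r = t")
    case True then show ?thesis unfolding K_def v_def using infsum_sq_nonneg[of "u t" UNIV] by simp
  next
    case False
    have lr: "in_l2h (u r)" using l2[OF inT[OF r]] .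
    have lw: "in_l2h (\<lambda>j. u r j - v j)" by (intro l2_diff lr lv)
    have w1: "infsum (\<lambda>j. (u r j - v j)\<^sup>2) UNIV < 1"
      using d0'[OF False] r unfolding v_def \<delta>_def dist_real_def
      using infsum_sq_nonneg[of "\<lambda>j. u r j - u t j" UNIV] by auto
    have "infsum (\<lambda>j. (u r j)\<^sup>2) UNIV \<le> infsum (\<lambda>j. 2 * (u r j - v j)\<^sup>2 + 2 * (v j)\<^sup>2) UNIV"
    proof (rule infsum_mono)
      show "(\<lambda>j. (u r j)\<^sup>2) summable_on UNIV" using lr unfolding in_l2h_def .
      show "(\<lambda>j. 2 * (u r j - v j)\<^sup>2 + 2 * (v j)\<^sup>2) summable_on UNIV"
        using lw lv unfolding in_l2h_def by (intro summable_on_add summable_on_cmult_right)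
      fix j
      show "(u r j)\<^sup>2 \<le> 2 * (u r j - v j)\<^sup>2 + 2 * (v j)\<^sup>2"
        using zero_le_power2[of "u r j - 2 * v j"] by (simp add: power2_eq_square algebra_simps)
    qed
    also have "\<dots> = 2 * infsum (\<lambda>j. (u r j - v j)\<^sup>2) UNIV + 2 * infsum (\<lambda>j. (v j)\<^sup>2) UNIV"
      using lw lv unfolding in_l2h_def
      by (simp add: infsum_add summable_on_cmult_right infsum_cmult_right)
    also have "\<dots> \<le> K" unfolding K_def using w1 by simp
    finally show ?thesis .
  qed
  define M where "M = sqrt K"
  have Mb: "\<bar>u r i\<bar> \<le> M" if r: "\<bar>r - t\<bar> < \<delta>" for r i
  proof -
    have "(u r i)\<^sup>2 \<le> K" using sq_le_infsum[OF l2[OF inT[OF r]], of i] Kb[OF r] by linarith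
    then show ?thesis unfolding M_def by (metis real_sqrt_abs real_sqrt_le_mono)
  qed
  define B where "B = 25 * (6 / h^3 + \<bar>\<beta>\<bar> * M^k / h)\<^sup>2 * K"
  have B0: "0 \<le> B" unfolding B_def using K0 by simp
  have Bb: "infsum (\<lambda>j. (Fop k \<beta> h (u r) j)\<^sup>2) UNIV \<le> B" if r: "\<bar>r - t\<bar> < \<delta>" for r
  proof -
    have "infsum (\<lambda>j. (Fop k \<beta> h (u r) j)\<^sup>2) UNIV \<le> 25 * (6 / h^3 + \<bar>\<beta>\<bar> * M^k / h)\<^sup>2 *
       infsum (\<lambda>j. (u r j)\<^sup>2) UNIV"
      by (rule Fop_l2_bound[OF l2[OF inT[OF r]] Mb[OF r] h])
    also have "\<dots> \<le> B" unfolding B_def using Kb[OF r] by (intro mult_left_mono) auto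
    finally show ?thesis .
  qed
  have "\<delta> > 0" unfolding \<delta>_def using d0 t by auto
  moreover have "\<delta> \<le> t" "\<delta> \<le> T - t" unfolding \<delta>_def by auto
  ultimately show ?thesis using B0 Bb by blast
qed

lemma split_F:
  fixes f :: gridfun
  assumes "f summable_on UNIV" "finite F"
  shows "infsum f UNIV = sum f F + infsum f (- F)"
proof -
  have "infsum f (F \<union> - F) = infsum f F + infsum f (- F)"
    using assms by (intro infsum_Un_disjoint summable_on_subset_banach[OF assms(1)]) auto
  then show ?thesis using assms by simp
qed


lemma dec_alg:
  fixes e h V X Y C :: real
  assumes "e \<noteq> 0"
  shows "(h*(V + (2*X + Y)) - h*V)/e = 2*h*C + 2*h*(X/e - C) + h*(Y/e)"
proof -
  have "(h*(V + (2*X + Y)) - h*V)/e = (2*h*X + h*Y)/e" by (simp add: algebra_simps)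
  also have "\<dots> = 2*h*(X/e) + h*(Y/e)" by (simp add: add_divide_distrib)
  also have "\<dots> = 2*h*C + 2*h*(X/e - C) + h*(Y/e)" by (simp add: algebra_simps)
  finally show ?thesis .
qed

lemma deriv_main:
  fixes u :: "real \<Rightarrow> gridfun" and P :: gridfun
  assumes h: "h > 0" and P: "bdd P" and t: "0 < t" "t < T"
    and l2: "\<And>r. r \<in> {0<..<T} \<Longrightarrow> in_l2h (u r)"
    and der: "\<And>r j. r \<in> {0<..<T} \<Longrightarrow> ((\<lambda>s. u s j) has_real_derivative (- Fop k \<beta> h (u r) j)) (at r)"
    and cont: "((\<lambda>s. infsum (\<lambda>j. (u s j - u t j)\<^sup>2) UNIV) \<longlongrightarrow> 0) (at t)"
  shows "((\<lambda>s. ipr h (u s) (\<lambda>j. P j * u s j)) has_real_derivative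
          2 * h * infsum (\<lambda>j. P j * u t j * (- Fop k \<beta> h (u t) j)) UNIV) (at t)"
proof -
  obtain \<delta> B where d: "\<delta> > 0" "0 \<le> B" "\<delta> \<le> t" "\<delta> \<le> T - t"
    and Bb: "\<And>r. \<bar>r - t\<bar> < \<delta> \<Longrightarrow> infsum (\<lambda>j. (Fop k \<beta> h (u r) j)\<^sup>2) UNIV \<le> B"
    using bounds[OF h t l2 cont, of k \<beta>] by blast
  have inT: "r \<in> {0<..<T}" if "\<bar>r - t\<bar> < \<delta>" for r using that d by auto
  have Lip: "infsum (\<lambda>j. (u s j - u t j)\<^sup>2) UNIV \<le> B * (s - t)\<^sup>2" if "\<bar>s - t\<bar> < \<delta>" for s
    by (rule lip[OF l2 der d(3,4) Bb that])
  define v where "v = u t"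
  define a where "a = (\<lambda>j. P j * v j)"
  define G where "G = (\<lambda>j. - Fop k \<beta> h v j)"
  define w where "w = (\<lambda>s j. u s j - v j)"
  have lv: "in_l2h v" unfolding v_def using t by (intro l2) auto
  have la: "in_l2h a" unfolding a_def by (intro l2_bmult P lv)
  have lG: "in_l2h G" unfolding G_def by (intro l2_uminus l2_Fop lv)
  have GB: "infsum (\<lambda>j. (G j)\<^sup>2) UNIV \<le> B" using Bb[of t] d unfolding G_def v_def by simp
  obtain Mp where Mp: "\<And>j. \<bar>P j\<bar> \<le> Mp" using P unfolding bdd_def by blast
  have Mp0: "0 \<le> Mp" using Mp[of 0] by linarith
  have lw: "in_l2h (w s)" if "\<bar>s - t\<bar> < \<delta>" for s
    unfolding w_def by (intro l2_diff lv l2 inT that)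
  have wB: "infsum (\<lambda>j. (w s j)\<^sup>2) UNIV \<le> B * (s - t)\<^sup>2" if "\<bar>s - t\<bar> < \<delta>" for s
    using Lip[OF that] unfolding w_def v_def .
  define A where "A = (\<lambda>s. ipr h (u s) (\<lambda>j. P j * u s j))"
  define D where "D = 2 * h * infsum (\<lambda>j. a j * G j) UNIV"
  define Z1 where "Z1 = (\<lambda>s. infsum (\<lambda>j. a j * (w s j / (s - t) - G j)) UNIV)"
  define Z2 where "Z2 = (\<lambda>s. infsum (\<lambda>j. P j * w s j * w s j) UNIV / (s - t))"
  have decomp: "(A s - A t) / (s - t) = D + 2 * h * Z1 s + h * Z2 s"
    if s: "\<bar>s - t\<bar> < \<delta>" "s \<noteq> t" for s
  proof -
    have st: "s - t \<noteq> 0" using s by simp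
    have s1: "(\<lambda>j. v j * (P j * v j)) summable_on UNIV"
      by (intro l2_prod_summable lv l2_bmult P)
    have s2: "(\<lambda>j. a j * w s j) summable_on UNIV" by (intro l2_prod_summable la lw s)
    have s3: "(\<lambda>j. P j * w s j * w s j) summable_on UNIV" by (intro summable_bff P lw s)
    have s4: "(\<lambda>j. a j * G j) summable_on UNIV" by (intro l2_prod_summable la lG)
    have "infsum (\<lambda>j. u s j * (P j * u s j)) UNIV =
        infsum (\<lambda>j. v j * (P j * v j) + (2 * (a j * w s j) + P j * w s j * w s j)) UNIV"
      by (rule infsum_cong) (simp add: a_def w_def algebra_simps power2_eq_square)
    also have "\<dots> = infsum (\<lambda>j. v j * (P j * v j)) UNIV + (2 * infsum (\<lambda>j. a j * w s j) UNIV
        + infsum (\<lambda>j. P j * w s j * w s j) UNIV)"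
      using s1 s2 s3
      by (simp add: infsum_add summable_on_add summable_on_cmult_right infsum_cmult_right)
    finally have X: "infsum (\<lambda>j. u s j * (P j * u s j)) UNIV = infsum (\<lambda>j. v j * (P j * v j)) UNIV + (2 * infsum (\<lambda>j. a j * w s j) UNIV
        + infsum (\<lambda>j. P j * w s j * w s j) UNIV)" .
    have As: "A s = h * (infsum (\<lambda>j. v j * (P j * v j)) UNIV + (2 * infsum (\<lambda>j. a j * w s j) UNIV
        + infsum (\<lambda>j. P j * w s j * w s j) UNIV))" unfolding A_def ipr_def X ..
    have At: "A t = h * infsum (\<lambda>j. v j * (P j * v j)) UNIV" unfolding A_def ipr_def v_def ..
    have Z1s: "Z1 s = infsum (\<lambda>j. a j * w s j) UNIV / (s - t) - infsum (\<lambda>j. a j * G j) UNIV"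
    proof -
      have "((\<lambda>j. (1 / (s - t)) * (a j * w s j) - a j * G j) has_sum
          ((1 / (s - t)) * infsum (\<lambda>j. a j * w s j) UNIV - infsum (\<lambda>j. a j * G j) UNIV)) UNIV"
        by (intro has_sum_diff' has_sum_cmult_right has_sum_infsum s2 s4)
      moreover have "(\<lambda>j. (1 / (s - t)) * (a j * w s j) - a j * G j) = (\<lambda>j. a j * (w s j / (s - t) - G j))"
        by (rule ext) (simp add: algebra_simps)
      ultimately show ?thesis unfolding Z1_def using infsumI by fastforce
    qed
    show ?thesis unfolding As At Z1s Z2_def D_def by (rule dec_alg[OF st])
  qed
  have Z2lim: "(Z2 \<longlongrightarrow> 0) (at t)"
  proof (rule Lim_null_comparison)
    show "eventually (\<lambda>s. norm (Z2 s) \<le> Mp * B * \<bar>s - t\<bar>) (at t)"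
      unfolding eventually_at
    proof (intro exI[of _ \<delta>] conjI ballI impI)
      show "\<delta> > 0" using d by simp
      fix s :: real assume "s \<in> UNIV" and st: "s \<noteq> t \<and> dist s t < \<delta>"
      then have s: "\<bar>s - t\<bar> < \<delta>" "s \<noteq> t" by (auto simp: dist_real_def)
      have sw: "(\<lambda>j. (w s j)\<^sup>2) summable_on UNIV" using lw[OF s(1)] unfolding in_l2h_def .
      have s3: "(\<lambda>j. P j * w s j * w s j) summable_on UNIV" by (intro summable_bff P lw s)
      have sm: "(\<lambda>j. Mp * (w s j)\<^sup>2) summable_on UNIV" by (intro summable_on_cmult_right sw)
      have pw: "\<bar>P j * w s j * w s j\<bar> \<le> Mp * (w s j)\<^sup>2" for j
      proof -
        have "\<bar>P j * w s j * w s j\<bar> = \<bar>P j\<bar> * (w s j)\<^sup>2" by (simp add: abs_mult power2_eq_square)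
        also have "\<dots> \<le> Mp * (w s j)\<^sup>2" using Mp[of j] by (intro mult_right_mono) auto
        finally show ?thesis .
      qed
      have up: "infsum (\<lambda>j. P j * w s j * w s j) UNIV \<le> infsum (\<lambda>j. Mp * (w s j)\<^sup>2) UNIV"
        by (rule infsum_mono[OF s3 sm]) (use pw in \<open>auto simp: abs_le_iff\<close>)
      have lo: "infsum (\<lambda>j. - (Mp * (w s j)\<^sup>2)) UNIV \<le> infsum (\<lambda>j. P j * w s j * w s j) UNIV"
      proof (rule infsum_mono[OF summable_on_uminus'[OF sm] s3])
        fix j show "- (Mp * (w s j)\<^sup>2) \<le> P j * w s j * w s j" using pw[of j] by (simp add: abs_le_iff)
      qed
      have im: "infsum (\<lambda>j. Mp * (w s j)\<^sup>2) UNIV = Mp * infsum (\<lambda>j. (w s j)\<^sup>2) UNIV"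
        by (rule infsum_cmult_right) (use sw in simp)
      have "\<bar>infsum (\<lambda>j. P j * w s j * w s j) UNIV\<bar> \<le> Mp * infsum (\<lambda>j. (w s j)\<^sup>2) UNIV"
        using up lo im by (simp add: infsum_uminus abs_le_iff)
      also have "\<dots> \<le> Mp * (B * (s - t)\<^sup>2)" using wB[OF s(1)] Mp0 by (intro mult_left_mono)
      finally have Y: "\<bar>infsum (\<lambda>j. P j * w s j * w s j) UNIV\<bar> \<le> Mp * (B * (s - t)\<^sup>2)" .
      have pos: "0 < \<bar>s - t\<bar>" using s by simp
      have "norm (Z2 s) = \<bar>infsum (\<lambda>j. P j * w s j * w s j) UNIV\<bar> / \<bar>s - t\<bar>"
        unfolding Z2_def by (simp add: abs_divide)
      also have "\<dots> \<le> Mp * (B * (s - t)\<^sup>2) / \<bar>s - t\<bar>" using Y pos by (intro divide_right_mono) auto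
      also have "\<dots> = Mp * B * \<bar>s - t\<bar>"
      proof -
        have sq: "(s - t)\<^sup>2 = \<bar>s - t\<bar> * \<bar>s - t\<bar>" by (metis abs_mult_self_eq power2_eq_square)
        have "Mp * (B * (\<bar>s - t\<bar> * \<bar>s - t\<bar>)) / \<bar>s - t\<bar> = (Mp * B * \<bar>s - t\<bar>) * \<bar>s - t\<bar> / \<bar>s - t\<bar>"
          by (simp only: mult.assoc)
        also have "\<dots> = Mp * B * \<bar>s - t\<bar>" using pos by (intro nonzero_mult_div_cancel_right) simp
        finally show ?thesis unfolding sq .
      qed
      finally show "norm (Z2 s) \<le> Mp * B * \<bar>s - t\<bar>" .
    qed
    have "((\<lambda>s. s - t) \<longlongrightarrow> 0) (at t)" by (rule LIM_zero[OF tendsto_ident_at])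
    then have "((\<lambda>s. \<bar>s - t\<bar>) \<longlongrightarrow> 0) (at t)" by (rule tendsto_rabs_zero)
    then show "((\<lambda>s. Mp * B * \<bar>s - t\<bar>) \<longlongrightarrow> 0) (at t)" by (rule tendsto_mult_right_zero)
  qed
  have Z1lim: "(Z1 \<longlongrightarrow> 0) (at t)"
  proof (rule tendstoI)
    fix e :: real assume e: "e > 0"
    define \<theta> where "\<theta> = e / (8 * (B + 1))"
    define \<eta> where "\<eta> = \<theta> * e / 2"
    have th: "\<theta> > 0" unfolding \<theta>_def using e d by simp
    have eta: "\<eta> > 0" unfolding \<eta>_def using e th by simp
    have sa: "(\<lambda>j. (a j)\<^sup>2) summable_on UNIV" using la unfolding in_l2h_def .
    obtain F where F: "finite F" and Fd: "dist (sum (\<lambda>j. (a j)\<^sup>2) F) (infsum (\<lambda>j. (a j)\<^sup>2) UNIV) \<le> \<eta>"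
      using infsum_finite_approximation[OF sa eta] by blast
    have tailA: "infsum (\<lambda>j. (a j)\<^sup>2) (- F) \<le> \<eta>"
      using split_F[OF sa F] Fd infsum_sq_nonneg[of a "- F"] by (simp add: dist_real_def)
    have fin: "((\<lambda>s. \<Sum>j\<in>F. a j * (w s j / (s - t) - G j)) \<longlongrightarrow> 0) (at t)"
    proof (rule tendsto_null_sum)
      fix j
      have "((\<lambda>s. u s j) has_real_derivative (- Fop k \<beta> h (u t) j)) (at t)" using der t by auto
      then have "((\<lambda>s. (u s j - u t j) / (s - t)) \<longlongrightarrow> G j) (at t)"
        unfolding has_field_derivative_iff G_def v_def .
      then have "((\<lambda>s. w s j / (s - t) - G j) \<longlongrightarrow> 0) (at t)"
        unfolding w_def v_def by (rule LIM_zero)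
      then show "((\<lambda>s. a j * (w s j / (s - t) - G j)) \<longlongrightarrow> 0) (at t)"
        by (rule tendsto_mult_right_zero)
    qed
    have ev1: "eventually (\<lambda>s. dist (\<Sum>j\<in>F. a j * (w s j / (s - t) - G j)) 0 < e / 2) (at t)"
      using tendstoD[OF fin, of "e/2"] e by simp
    have ev2: "eventually (\<lambda>s. \<bar>s - t\<bar> < \<delta> \<and> s \<noteq> t) (at t)"
      unfolding eventually_at using d by (intro exI[of _ \<delta>]) (auto simp: dist_real_def)
    show "eventually (\<lambda>s. dist (Z1 s) 0 < e) (at t)"
      using ev1 ev2
    proof eventually_elim
      case (elim s)
      then have s: "\<bar>s - t\<bar> < \<delta>" "s \<noteq> t" by auto
      define dd where "dd = (\<lambda>j. w s j / (s - t) - G j)"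
      have ldd: "in_l2h dd" unfolding dd_def by (intro l2_diff l2_div lw s lG)
      have sdd: "(\<lambda>j. (dd j)\<^sup>2) summable_on UNIV" using ldd unfolding in_l2h_def .
      have sw: "(\<lambda>j. (w s j)\<^sup>2) summable_on UNIV" using lw[OF s(1)] unfolding in_l2h_def .
      have sG: "(\<lambda>j. (G j)\<^sup>2) summable_on UNIV" using lG unfolding in_l2h_def .
      have ddB: "infsum (\<lambda>j. (dd j)\<^sup>2) UNIV \<le> 4 * B"
      proof -
        have "infsum (\<lambda>j. (dd j)\<^sup>2) UNIV \<le> infsum (\<lambda>j. (2 / (s - t)\<^sup>2) * (w s j)\<^sup>2 + 2 * (G j)\<^sup>2) UNIV"
        proof (rule infsum_mono[OF sdd])
          show "(\<lambda>j. (2 / (s - t)\<^sup>2) * (w s j)\<^sup>2 + 2 * (G j)\<^sup>2) summable_on UNIV"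
            by (intro summable_on_add summable_on_cmult_right sw sG)
          fix j
          have "(dd j)\<^sup>2 \<le> 2 * (w s j / (s - t))\<^sup>2 + 2 * (G j)\<^sup>2"
            unfolding dd_def using zero_le_power2[of "w s j / (s - t) + G j"]
            by (simp add: power2_eq_square algebra_simps)
          then show "(dd j)\<^sup>2 \<le> (2 / (s - t)\<^sup>2) * (w s j)\<^sup>2 + 2 * (G j)\<^sup>2"
            by (simp add: power_divide)
        qed
        also have "\<dots> = (2 / (s - t)\<^sup>2) * infsum (\<lambda>j. (w s j)\<^sup>2) UNIV + 2 * infsum (\<lambda>j. (G j)\<^sup>2) UNIV"
        proof -
          have "infsum (\<lambda>j. (2 / (s - t)\<^sup>2) * (w s j)\<^sup>2 + 2 * (G j)\<^sup>2) UNIV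
             = infsum (\<lambda>j. (2 / (s - t)\<^sup>2) * (w s j)\<^sup>2) UNIV + infsum (\<lambda>j. 2 * (G j)\<^sup>2) UNIV"
            by (intro infsum_add summable_on_cmult_right sw sG)
          moreover have "infsum (\<lambda>j. (2 / (s - t)\<^sup>2) * (w s j)\<^sup>2) UNIV = (2 / (s - t)\<^sup>2) * infsum (\<lambda>j. (w s j)\<^sup>2) UNIV"
            by (rule infsum_cmult_right) (use sw in simp)
          moreover have "infsum (\<lambda>j. 2 * (G j)\<^sup>2) UNIV = 2 * infsum (\<lambda>j. (G j)\<^sup>2) UNIV"
            by (rule infsum_cmult_right) (use sG in simp)
          ultimately show ?thesis by (simp only:)
        qed
        also have "\<dots> \<le> (2 / (s - t)\<^sup>2) * (B * (s - t)\<^sup>2) + 2 * B"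
          using wB[OF s(1)] GB by (intro add_mono mult_left_mono) auto
        also have "\<dots> = 4 * B" using s by (simp add: field_simps)
        finally show ?thesis .
      qed
      have ddT: "infsum (\<lambda>j. (dd j)\<^sup>2) (- F) \<le> 4 * B"
        using split_F[OF sdd F] ddB sum_nonneg[of F "\<lambda>j. (dd j)\<^sup>2"] by simp
      have sad: "(\<lambda>j. a j * dd j) summable_on UNIV" by (intro l2_prod_summable la ldd)
      have tail: "\<bar>infsum (\<lambda>j. a j * dd j) (- F)\<bar> \<le> e / 2"
      proof -
        have "\<bar>infsum (\<lambda>j. a j * dd j) (- F)\<bar> \<le> infsum (\<lambda>j. (a j)\<^sup>2) (- F) / (2*\<theta>) + \<theta>/2 * infsum (\<lambda>j. (dd j)\<^sup>2) (- F)"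
          by (intro cs_bound summable_on_subset_banach[OF sa] summable_on_subset_banach[OF sdd] th) auto
        also have "\<dots> \<le> \<eta> / (2*\<theta>) + \<theta>/2 * (4 * B)"
          using tailA ddT th by (intro add_mono mult_left_mono divide_right_mono) auto
        also have "\<eta> / (2*\<theta>) = e / 4" unfolding \<eta>_def using th by (simp add: field_simps)
        also have "\<theta>/2 * (4 * B) \<le> e / 4"
        proof -
          have "\<theta>/2 * (4 * B) = e * B / (4 * (B + 1))" unfolding \<theta>_def using d by (simp add: field_simps)
          also have "\<dots> \<le> e * (B + 1) / (4 * (B + 1))" using e d
            by (intro divide_right_mono mult_left_mono) auto
          also have "\<dots> = e / 4"
          proof -
            have "B + 1 \<noteq> 0" using d by simp
            then show ?thesis by (simp add: field_simps)
          qed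
          finally show ?thesis .
        qed
        finally show ?thesis by simp
      qed
      have "Z1 s = (\<Sum>j\<in>F. a j * dd j) + infsum (\<lambda>j. a j * dd j) (- F)"
      proof -
        have "Z1 s = infsum (\<lambda>j. a j * dd j) UNIV" unfolding Z1_def dd_def by simp
        then show ?thesis using split_F[OF sad F] by simp
      qed
      then have "\<bar>Z1 s\<bar> \<le> \<bar>\<Sum>j\<in>F. a j * dd j\<bar> + \<bar>infsum (\<lambda>j. a j * dd j) (- F)\<bar>"
        by simp
      moreover have "\<bar>\<Sum>j\<in>F. a j * dd j\<bar> < e / 2" using elim unfolding dd_def by (simp add: dist_real_def)
      ultimately show "dist (Z1 s) 0 < e" using tail by (simp add: dist_real_def)
    qed
  qed
  have Qlim: "((\<lambda>s. D + 2 * h * Z1 s + h * Z2 s) \<longlongrightarrow> D) (at t)"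
    using tendsto_add[OF tendsto_add[OF tendsto_const tendsto_mult_right_zero[OF Z1lim]] tendsto_mult_right_zero[OF Z2lim]]
    by simp
  have ev: "eventually (\<lambda>s. D + 2 * h * Z1 s + h * Z2 s = (A s - A t) / (s - t)) (at t)"
    unfolding eventually_at using d decomp by (intro exI[of _ \<delta>]) (auto simp: dist_real_def)
  have "((\<lambda>s. (A s - A t) / (s - t)) \<longlongrightarrow> D) (at t)"
    using tendsto_cong[OF ev] Qlim by simp
  then have "(A has_real_derivative D) (at t)" unfolding has_field_derivative_iff .
  then show ?thesis unfolding A_def D_def a_def G_def v_def .
qed


lemma final_alg:
  fixes h \<beta> c S0 S1 S2 S3 S4 S5 S6 S7 S8 S9 S10 :: real
  assumes "h*S0 + h*S1 + (h/2)*S2 + h*h*S3 + (h*h/2)*S4 - (h*h/2)*S5 + h*S6 + h*h*S7 + h*h*S8 + h*h*S9 - (\<beta>/2)*c*h*S10 = 0"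
  shows "2*h*S0/2 + h*S1 + h*S2/2 + h*(h*S3) = -(h/2)*(h*S4) + h/2*(h*S5) - h*S6 - h*(h*S7) - h*(h*S8) - h*(h*S9) + \<beta>/2*c*(h*S10)"
proof -
  have "2*h*S0/2 + h*S1 + h*S2/2 + h*(h*S3) - (-(h/2)*(h*S4) + h/2*(h*S5) - h*S6 - h*(h*S7) - h*(h*S8) - h*(h*S9) + \<beta>/2*c*(h*S10))
     = h*S0 + h*S1 + (h/2)*S2 + h*h*S3 + (h*h/2)*S4 - (h*h/2)*S5 + h*S6 + h*h*S7 + h*h*S8 + h*h*S9 - (\<beta>/2)*c*h*S10"
    by (simp add: algebra_simps)
  then show ?thesis using assms by simp
qed

theorem lemma3p6:
  fixes k :: nat and \<beta> h T :: real and p :: "real \<Rightarrow> real"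
    and \<phi> :: gridfun and u :: "real \<Rightarrow> gridfun" and t :: real
  assumes "k \<in> {1, 2}" and "\<beta> \<noteq> 0" and "h > 0"
    and "strict_mono p" and "smooth_bdd p"
    and "in_l2h \<phi>"
    and "T > 0" and "is_solution k \<beta> h T \<phi> u"
    and "t \<in> {0<..<T}"
  defines "P \<equiv> (\<lambda>j::int. p (real_of_int j * h))"
  shows "\<exists>D. ((\<lambda>s. ipr h (u s) (\<lambda>j. P j * u s j)) has_real_derivative D) (at t) \<and>
    D / 2
    + ipr h (Dminus h (u t)) (\<lambda>j. Dplus h P j * Dminus h (u t) j)
    + ipr h (Dplus h (u t)) (\<lambda>j. Dminus h P j * Dplus h (u t) j) / 2
    + h * ipr h (Dplus h (Dminus h (u t))) (\<lambda>j. P j * Dplus h (Dminus h (u t)) j)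
    = - (h / 2) * ipr h (Dplus h (Dminus h (u t))) (\<lambda>j. Dplus h P j * Dminus h (u t) j)
      + (h / 2) * ipr h (\<lambda>j. Dplus h (u t) j * Dminus h P j) (Dplus h (Dminus h (u t)))
      - ipr h (Dminus h (u t)) (\<lambda>j. shiftm (u t) j * Dzero h (Dminus h P) j)
      - h * ipr h (Dplus h (Dminus h (u t))) (\<lambda>j. Dminus h P j * Dminus h (u t) j)
      - h * ipr h (Dplus h (Dminus h (u t))) (\<lambda>j. Dplus h P j * Dplus h (u t) j)
      - h * ipr h (Dplus h (Dminus h (u t))) (\<lambda>j. u t j * Dplus h (Dminus h P) j)
      + (\<beta> / 2) * ((real k + 1) / (real k + 2)) *
          ipr h (\<lambda>j. (u t j) ^ (k + 1))
                (\<lambda>j. shiftp (u t) j * Dplus h P j + shiftm (u t) j * Dminus h P j)"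
proof -
  have tT: "0 < t" "t < T" using assms(9) by auto
  have iT: "interior {0..<T} = {0<..<T}" by simp
  have sol: "u 0 = \<phi>" "\<forall>t\<in>{0..<T}. in_l2h (u t)"
    "\<forall>t\<in>{0..<T}. ((\<lambda>s. \<Sum>\<^sub>\<infinity>j\<in>UNIV. (u s j - u t j)\<^sup>2) \<longlongrightarrow> 0) (at t within {0..<T})"
    "\<forall>t\<in>{0..<T}. \<forall>j. ((\<lambda>s. u s j) has_real_derivative (- Fop k \<beta> h (u t) j)) (at t within {0..<T})"
    using assms(8) unfolding is_solution_def by auto
  have l2: "\<And>r. r \<in> {0<..<T} \<Longrightarrow> in_l2h (u r)" using sol(2) by auto
  have der: "\<And>r j. r \<in> {0<..<T} \<Longrightarrow> ((\<lambda>s. u s j) has_real_derivative (- Fop k \<beta> h (u r) j)) (at r)"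
  proof -
    fix r j assume r: "r \<in> {0<..<T}"
    then have "at r within {0..<T} = at r" using iT by (intro at_within_interior) simp
    then show "((\<lambda>s. u s j) has_real_derivative (- Fop k \<beta> h (u r) j)) (at r)"
      using sol(4) r by (metis greaterThanLessThan_iff atLeastLessThan_iff less_imp_le)
  qed
  have cont: "((\<lambda>s. infsum (\<lambda>j. (u s j - u t j)\<^sup>2) UNIV) \<longlongrightarrow> 0) (at t)"
  proof -
    have e: "at t within {0..<T} = at t" using iT assms(9) by (intro at_within_interior) simp
    have "t \<in> {0..<T}" using tT by simp
    from bspec[OF sol(3) this] show ?thesis unfolding e .
  qed
  have bP: "bdd P"
  proof -
    have "bounded (range p)" using assms(5) unfolding smooth_bdd_def by (metis funpow_0)
    then obtain M where "\<And>x. \<bar>p x\<bar> \<le> M" unfolding bounded_iff by auto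
    then show ?thesis unfolding bdd_def P_def by blast
  qed
  have h0: "h \<noteq> 0" using assms(3) by simp
  have lv: "in_l2h (u t)" using l2 assms(9) by simp
  note I = identity[OF lv bP h0, of k \<beta>]
  show ?thesis
    apply (rule exI[of _ "2 * h * infsum (\<lambda>j. P j * u t j * (- Fop k \<beta> h (u t) j)) UNIV"])
    apply (rule conjI)
     apply (rule deriv_main[OF assms(3) bP tT])
       apply (erule l2)
      apply (erule der)
     apply (rule cont)
    unfolding ipr_def by (rule final_alg[OF I])
qed


end
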